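(* Let $\mathfrak{g}=\mathfrak{W}\oplus\mathfrak{W}$ be the direct sum of two copies of the Witt algebra and let $\bigwedge^2\mathfrak{g}$ carry the $\mathfrak{g}$-module structure induced by the adjoint action. Then $$H^1\big(\mathfrak{W}\oplus\mathfrak{W},\textstyle\bigwedge^2(\mathfrak{W}\oplus\mathfrak{W})\big)=\{0\}.$$ Equivalently: for every linear map $\delta:\mathfrak{g}\to\bigwedge^2\mathfrak{g}$ satisfying $\delta([x,y])=x\cdot\delta(y)-y\cdot\delta(x)$ for all $x,y\in\mathfrak{g}$, there exists $r\in\bigwedge^2\mathfrak{g}$ with $\delta(x)=x\cdot r$ for all $x\in\mathfrak{g}$.
   Context: The Witt algebra $\mathfrak{W}$ is the complex Lie algebra with basis $\{L_m : m\in\mathbb{Z}\}$ and bracket $[L_m,L_n]=(m-n)L_{m+n}$. The algebra $\mathfrak{W}\oplus\mathfrak{W}$ has basis $\{L_m,\bar L_m: m\in\mathbb{Z}\}$ with $[L_m,L_n]=(m-n)L_{m+n}$, $[\bar L_m,\bar L_n]=(m-n)\bar L_{m+n}$, $[L_m,\bar L_n]=0$. For a Lie algebra $\mathfrak{g}$, $\bigwedge^2\mathfrak{g}$ (finite sums of $a\wedge b=a\otimes b-b\otimes a$) is a $\mathfrak{g}$-module via $x\cdot(a\wedge b)=[x,a]\wedge b+a\wedge[x,b]$. A 1-cocycle is a linear map $\delta:\mathfrak{g}\to\bigwedge^2\mathfrak{g}$ with $\delta([x,y])=x\cdot\delta(y)-y\cdot\delta(x)$; a 1-coboundary is a map $x\mapsto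 x\cdot r$ for fixed $r\in\bigwedge^2\mathfrak{g}$; $H^1$ is the quotient of cocycles by coboundaries. *)

theory Defs
  imports Complex_Main "HOL-Library.Function_Algebras"
begin

text \<open>Basis of W (+) W: index (b, m) with b :: bool the copy (False: L_m, True: Lbar_m).\<close>

type_synonym idx = "bool \<times> int"
type_synonym elt = "idx \<Rightarrow> complex"
type_synonym tens = "idx \<times> idx \<Rightarrow> complex"

definition supp :: "('a \<Rightarrow> complex) \<Rightarrow> 'a set" where
  "supp f = {i. f i \<noteq> 0}"

definition gW :: "elt set" where
  "gW = {x. finite (supp x)}"

definition basis_vec :: "idx \<Rightarrow> elt" where
  "basis_vec i = (\<lambda>k. if k = i then 1 else 0)"

definition br_basis :: "idx \<Rightarrow> idx \<Rightarrow> elt" where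
  "br_basis i j = (if fst i = fst j
     then (\<lambda>k. of_int (snd i - snd j) * basis_vec (fst i, snd i + snd j) k)
     else (\<lambda>k. 0))"

definition bracket :: "elt \<Rightarrow> elt \<Rightarrow> elt" where
  "bracket x y = (\<Sum>i\<in>supp x. \<Sum>j\<in>supp y. (\<lambda>k. x i * y j * br_basis i j k))"

definition tensor :: "elt \<Rightarrow> elt \<Rightarrow> tens" where
  "tensor a b = (\<lambda>(i, j). a i * b j)"

definition wedge :: "elt \<Rightarrow> elt \<Rightarrow> tens" where
  "wedge a b = tensor a b - tensor b a"

inductive_set Wedge2 :: "tens set" where
  zero: "0 \<in> Wedge2"
| add: "\<lbrakk>a \<in> gW; b \<in> gW; t \<in> Wedge2\<rbrakk> \<Longrightarrow> wedge a b + t \<in> Wedge2"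

text \<open>Action of g on g (x) g induced by the adjoint action:
  x.(a (x) b) = [x,a] (x) b + a (x) [x,b], extended linearly.\<close>
definition act :: "elt \<Rightarrow> tens \<Rightarrow> tens" where
  "act x t = (\<Sum>p\<in>supp t. (\<lambda>q. t p * (tensor (bracket x (basis_vec (fst p))) (basis_vec (snd p)) q
                                   + tensor (basis_vec (fst p)) (bracket x (basis_vec (snd p))) q)))"

definition is_cocycle :: "(elt \<Rightarrow> tens) \<Rightarrow> bool" where
  "is_cocycle \<delta> \<longleftrightarrow>
     (\<forall>x\<in>gW. \<delta> x \<in> Wedge2) \<and>
     (\<forall>x\<in>gW. \<forall>y\<in>gW. \<delta> (x + y) = \<delta> x + \<delta> y) \<and>
     (\<forall>c. \<forall>x\<in>gW. \<delta> (\<lambda>k. c * x k) = (\<lambda>q. c * \<delta> x q)) \<and>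
     (\<forall>x\<in>gW. \<forall>y\<in>gW. \<delta> (bracket x y) = act x (\<delta> y) - act y (\<delta> x))"

definition is_coboundary :: "(elt \<Rightarrow> tens) \<Rightarrow> bool" where
  "is_coboundary \<delta> \<longleftrightarrow> (\<exists>r\<in>Wedge2. \<forall>x\<in>gW. \<delta> x = act x r)"

end

theory Submission
  imports Defs
begin


definition Lop :: "int \<Rightarrow> int \<Rightarrow> (int \<Rightarrow> complex) \<Rightarrow> int \<Rightarrow> complex" where
  "Lop m n t x = of_int (2*m - x) * t (x - m) + of_int (m - n + x) * t x"

definition fs1 :: "(int \<Rightarrow> complex) \<Rightarrow> bool" where
  "fs1 t \<longleftrightarrow> (\<exists>N. \<forall>x. N < \<bar>x\<bar> \<longrightarrow> t x = 0)"

lemma cob_Lop: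
  "of_int (m-n) * Lop (m+n) 0 c x = Lop m n (Lop n 0 c) x - Lop n m (Lop m 0 c) x"
proof -
  have e1: "x - m - n = x - (m+n)" "x - n - m = x - (m+n)" by auto
  show ?thesis unfolding Lop_def e1
    by (simp add: algebra_simps)
qed

lemma Lop_diff: "Lop m n (\<lambda>y. f y - g y) x = Lop m n f x - Lop m n g x"
  by (simp add: Lop_def algebra_simps)
lemma Lop_add: "Lop m n (\<lambda>y. f y + g y) x = Lop m n f x + Lop m n g x"
  by (simp add: Lop_def algebra_simps)
lemma Lop_scale: "Lop m n (\<lambda>y. k * f y) x = k * Lop m n f x"
  by (simp add: Lop_def algebra_simps)

primrec upc :: "(int \<Rightarrow> complex) \<Rightarrow> nat \<Rightarrow> complex" where
  "upc \<alpha> 0 = \<alpha> 2 / 3"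
| "upc \<alpha> (Suc k) = (\<alpha> (int k + 3) + of_int (int k + 1) * upc \<alpha> k) / of_int (int k + 4)"

primrec dnc :: "(int \<Rightarrow> complex) \<Rightarrow> nat \<Rightarrow> complex" where
  "dnc \<alpha> 0 = \<alpha> (-1) / 3"
| "dnc \<alpha> (Suc k) = (\<alpha> (- int k - 2) + of_int (int k + 1) * dnc \<alpha> k) / of_int (int k + 4)"

definition csol :: "(int \<Rightarrow> complex) \<Rightarrow> int \<Rightarrow> complex" where
  "csol \<alpha> x = (if 2 \<le> x then upc \<alpha> (nat (x-2)) else if x \<le> -2 then dnc \<alpha> (nat (-2-x))
     else if x = -1 then 0 else if x = 0 then \<alpha> 0 else (\<alpha> 1 - \<alpha> 0)/2)"

lemma csol_sol: "Lop 1 0 (csol \<alpha>) x = \<alpha> x"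
proof -
  consider "x \<ge> 3" | "x = 2" | "x = 1" | "x = 0" | "x = -1" | "x \<le> -2" by linarith
  then show ?thesis
  proof cases
    case 1
    then obtain k where k: "x = int k + 3" by (metis add.commute le_add_diff_inverse2 zle_iff_zadd)
    have a: "csol \<alpha> x = upc \<alpha> (Suc k)" using k by (simp add: csol_def nat_add_distrib)
    have b: "csol \<alpha> (x - 1) = upc \<alpha> k" using k by (simp add: csol_def)
    have nz: "(of_int (int k + 4) :: complex) \<noteq> 0" by (subst of_int_eq_0_iff) simp
    show ?thesis unfolding Lop_def a b using nz k
      by (simp add: field_simps)
  next
    case 2 then show ?thesis by (simp add: Lop_def csol_def)
  next
    case 3 then show ?thesis by (simp add: Lop_def csol_def field_simps)
  next
    case 4 then show ?thesis by (simp add: Lop_def csol_def)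
  next
    case 5 then show ?thesis by (simp add: Lop_def csol_def)
  next
    case 6
    then obtain k where k: "x = - int k - 2" by (metis add.commute diff_minus_eq_add minus_diff_eq neg_le_iff_le zle_iff_zadd)
    have a: "csol \<alpha> x = dnc \<alpha> k" using k by (simp add: csol_def)
    have b: "csol \<alpha> (x - 1) = dnc \<alpha> (Suc k)" using k by (simp add: csol_def nat_add_distrib)
    have nz: "(of_int (int k + 4) :: complex) \<noteq> 0" by (subst of_int_eq_0_iff) simp
    show ?thesis unfolding Lop_def a b using nz
      by (simp add: k field_simps)
  qed
qed

lemma up_vanish:
  fixes f :: "int \<Rightarrow> complex"
  assumes "f x0 = 0" "\<And>x. x > x0 \<Longrightarrow> f (x-1) = 0 \<Longrightarrow> f x = 0" "x \<ge> x0"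
  shows "f x = 0"
  using assms(3)
proof (induction x rule: int_ge_induct)
  case base then show ?case using assms(1) .
next
  case (step i) then show ?case using assms(2)[of "i+1"] by simp
qed

lemma down_vanish:
  fixes f :: "int \<Rightarrow> complex"
  assumes "f x0 = 0" "\<And>x. x < x0 \<Longrightarrow> f (x+1) = 0 \<Longrightarrow> f x = 0" "x \<le> x0"
  shows "f x = 0"
  using assms(3)
proof (induction x rule: int_le_induct)
  case base then show ?case using assms(1) .
next
  case (step i) then show ?case using assms(2)[of "i-1"] by simp
qed

lemma of_int_nz: "(k::int) \<noteq> 0 \<Longrightarrow> (of_int k :: complex) \<noteq> 0" by simp

lemma tailY:
  fixes A B C :: complex and x :: int
  assumes h1: "of_int (-2-x)*B + of_int (x-3)*A = 0"
    and h2: "of_int (-3-x)*C + of_int (x-2)*B = 0"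
    and h3: "of_int (-4-x)*C + of_int (x-4)*A = 0"
    and nx: "x*x \<noteq> 24"
  shows "A = 0"
proof -
  have "of_int ((x+4)*(x-2)*(x-3) - (x+2)*(x+3)*(x-4)) * A
     = of_int ((x+4)*(x-2)) * (of_int (-2-x)*B + of_int (x-3)*A)
     + of_int ((x+4)*(x+2)) * (of_int (-3-x)*C + of_int (x-2)*B)
     - of_int ((x+2)*(x+3)) * (of_int (-4-x)*C + of_int (x-4)*A)"
    by (simp add: algebra_simps)
  also have "\<dots> = 0" using h1 h2 h3 by simp
  finally have "of_int ((x+4)*(x-2)*(x-3) - (x+2)*(x+3)*(x-4)) * A = 0" .
  moreover have "(x+4)*(x-2)*(x-3) - (x+2)*(x+3)*(x-4) \<noteq> 0"
  proof -
    have "(x+4)*(x-2)*(x-3) - (x+2)*(x+3)*(x-4) = 48 - 2*(x*x)" by (simp add: algebra_simps)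
    then show ?thesis using nx by simp
  qed
  ultimately show ?thesis by (metis mult_eq_0_iff of_int_eq_0_iff)
qed

lemma sq_ne_24: "(x::int)*x \<noteq> 24"
proof
  assume h: "x*x = 24"
  have "\<bar>x\<bar> \<le> 4 \<or> \<bar>x\<bar> \<ge> 5" by linarith
  then show False
  proof
    assume "\<bar>x\<bar> \<le> 4"
    then have "\<bar>x\<bar>*\<bar>x\<bar> \<le> 4*4" by (meson abs_ge_zero mult_mono')
    then show False using h by (simp add: abs_mult[symmetric])
  next
    assume "\<bar>x\<bar> \<ge> 5"
    then have "\<bar>x\<bar>*\<bar>x\<bar> \<ge> 5*5" by (meson mult_mono' order.trans zero_le_numeral)
    then show False using h by (simp add: abs_mult[symmetric])
  qed
qed

definition Om :: "int \<Rightarrow> complex" where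
  "Om x = (if x = -1 \<or> x = 1 then 1 else if x = 0 then -2 else 0)"

lemma Lop0: "Lop 0 0 f x = 0" by (simp add: Lop_def algebra_simps)

lemma Om_L1: "Lop 1 0 Om x = 0"
proof -
  consider "x \<le> -2" | "x = -1" | "x = 0" | "x = 1" | "x = 2" | "x \<ge> 3" by linarith
  then show ?thesis by cases (auto simp: Lop_def Om_def)
qed

lemma Om_Lm1: "Lop (-1) 0 Om x = 0"
proof -
  consider "x \<le> -3" | "x = -2" | "x = -1" | "x = 0" | "x = 1" | "x \<ge> 2" by linarith
  then show ?thesis by cases (auto simp: Lop_def Om_def)
qed

definition Yv :: "int \<Rightarrow> complex" where
  "Yv x = (if x = -1 \<or> x = 3 then 1 else if x = 0 \<or> x = 2 then -4 else if x = 1 then 6 else 0)"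

lemma Om_L2: "Lop 2 0 Om x = Yv x"
proof -
  consider "x \<le> -2" | "x = -1" | "x = 0" | "x = 1" | "x = 2" | "x = 3" | "x \<ge> 4" by linarith
  then show ?thesis by cases (auto simp: Lop_def Om_def Yv_def)
qed

lemma Om_Lm2: "Lop (-2) 0 Om x = - Yv (x + 2)"
proof -
  consider "x \<le> -4" | "x = -3" | "x = -2" | "x = -1" | "x = 0" | "x = 1" | "x \<ge> 2" by linarith
  then show ?thesis by cases (auto simp: Lop_def Om_def Yv_def)
qed

lemma Lop_zero: "Lop m n (\<lambda>y. 0) x = 0" by (simp add: Lop_def)

lemma fin_tail:
  fixes c :: "int \<Rightarrow> complex"
  assumes h1: "Lop 1 0 c x = 0" and h2: "Lop 1 0 c (x-1) = 0" and h3: "Lop 2 0 c x = 0"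
  shows "c (x-2) = 0"
proof -
  define A where "A = c (x-2)"
  define B where "B = c (x-1)"
  define C where "C = c x"
  have e1: "of_int (2-x) * B + of_int (1+x) * C = 0" using h1 by (simp add: Lop_def A_def B_def C_def)
  have e2: "of_int (3-x) * A + of_int x * B = 0" using h2 by (simp add: Lop_def A_def B_def C_def algebra_simps)
  have e3: "of_int (4-x) * A + of_int (2+x) * C = 0" using h3 by (simp add: Lop_def A_def B_def C_def)
  have "12 * A = of_int (x*(1+x)) * (of_int (4-x) * A + of_int (2+x) * C)
        - of_int ((2+x)*x) * (of_int (2-x) * B + of_int (1+x) * C)
        + of_int ((2+x)*(2-x)) * (of_int (3-x) * A + of_int x * B)"
    by (simp add: algebra_simps)
  also have "\<dots> = 0" using e1 e2 e3 by simp
  finally show ?thesis unfolding A_def by simp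
qed

lemma witt_core:
  fixes d :: "int \<Rightarrow> int \<Rightarrow> complex"
  assumes fin: "\<And>m. fs1 (d m)" and d0: "\<And>x. d 0 x = 0"
    and rel: "\<And>m n x. of_int (m-n) * d (m+n) x = Lop m n (d n) x - Lop n m (d m) x"
  shows "\<exists>c. fs1 c \<and> (\<forall>m x. d m x = Lop m 0 c x)"
proof -
  define c0 where "c0 = csol (d 1)"
  define e where "e = (\<lambda>m x. d m x - Lop m 0 c0 x)"
  have rele: "of_int (m-n) * e (m+n) x = Lop m n (e n) x - Lop n m (e m) x" for m n x
  proof -
    have "of_int (m-n) * e (m+n) x = of_int (m-n) * d (m+n) x - of_int (m-n) * Lop (m+n) 0 c0 x"
      by (simp add: e_def algebra_simps)
    also have "\<dots> = (Lop m n (d n) x - Lop n m (d m) x) - (Lop m n (Lop n 0 c0) x - Lop n m (Lop m 0 c0) x)"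
      using rel cob_Lop by simp
    also have "\<dots> = Lop m n (e n) x - Lop n m (e m) x"
      by (simp add: e_def Lop_diff)
    finally show ?thesis .
  qed
  have e0: "e 0 = (\<lambda>x. 0)" by (rule ext) (simp add: e_def d0 Lop0)
  have e1: "e 1 = (\<lambda>x. 0)" by (rule ext) (simp add: e_def c0_def csol_sol)
  define E where "E = e (-1)"
  define Z where "Z = e (-2)"
  define Y where "Y = e 2"
  have hE: "of_int (2-x) * E (x-1) + of_int (2+x) * E x = 0" for x
    using rele[of 1 "-1" x] by (simp add: e0 e1 Lop_zero Lop_def E_def)
  have hZ: "of_int (2-x) * Z (x-1) + of_int (3+x) * Z x = 3 * E x" for x
    using rele[of 1 "-2" x] by (simp add: e0 e1 Lop_zero Lop_def E_def Z_def)
  have hY: "of_int (-2-x) * Y (x+1) + of_int (x-3) * Y x = of_int (4-x) * E (x-2) + of_int (3+x) * E x" for x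
    using rele[of "-1" 2 x] by (simp add: e0 e1 Lop_zero Lop_def E_def Y_def algebra_simps)
  have hYZ: "of_int (4-x) * Z (x-2) + of_int (4+x) * Z x = of_int (-4-x) * Y (x+2) + of_int (x-4) * Y x" for x
    using rele[of 2 "-2" x] by (simp add: e0 e1 Lop_zero Lop_def Z_def Y_def algebra_simps)
  have Eup: "E x = 0" if "x \<ge> 2" for x
  proof (rule up_vanish[of E 2 x])
    show "E 2 = 0" using hE[of 2] by simp
    show "E x = 0" if "x > 2" "E (x-1) = 0" for x
      using hE[of x] that by (simp del: of_int_add of_int_diff)
  qed (use that in simp)
  have Edn: "E x = 0" if "x \<le> -3" for x
  proof (rule down_vanish[of E "-3" x])
    show "E (-3) = 0" using hE[of "-2"] by simp
    show "E x = 0" if "x < -3" "E (x+1) = 0" for x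
      using hE[of "x+1"] that by (simp del: of_int_add of_int_diff)
  qed (use that in simp)
  have Zup: "Z x = 0" if "x \<ge> 2" for x
  proof (rule up_vanish[of Z 2 x])
    show "Z 2 = 0" using hZ[of 2] Eup[of 2] by simp
    show "Z x = 0" if "x > 2" "Z (x-1) = 0" for x
      using hZ[of x] Eup[of x] that by (simp del: of_int_add of_int_diff)
  qed (use that in simp)
  have Zdn: "Z x = 0" if "x \<le> -4" for x
  proof (rule down_vanish[of Z "-4" x])
    show "Z (-4) = 0" using hZ[of "-3"] Edn[of "-3"] by simp
    show "Z x = 0" if "x < -4" "Z (x+1) = 0" for x
      using hZ[of "x+1"] Edn[of "x+1"] that by (simp del: of_int_add of_int_diff)
  qed (use that in simp)
  have Ytail: "Y x = 0" if "x \<ge> 4 \<or> x \<le> -4" for x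
  proof (rule tailY[of x "Y (x+1)" "Y x" "Y (x+2)"])
    have a: "E (x-2) = 0" "E x = 0" "E (x-1) = 0" "E (x+1) = 0" "Z (x-2) = 0" "Z x = 0"
      using that Eup Edn Zup Zdn by auto
    show "of_int (-2-x) * Y (x+1) + of_int (x-3) * Y x = 0" using hY[of x] a by simp
    show "of_int (-3-x) * Y (x+2) + of_int (x-2) * Y (x+1) = 0"
      using hY[of "x+1"] a by (simp add: algebra_simps)
    show "of_int (-4-x) * Y (x+2) + of_int (x-4) * Y x = 0"
      using hYZ[of x] a by simp
    show "x*x \<noteq> 24" by (rule sq_ne_24)
  qed
  have Ym3: "Y (-3) = 0" using hY[of "-4"] Ytail[of "-4"] Edn[of "-6"] Edn[of "-4"] by simp
  have Ym2: "Y (-2) = 0" using hY[of "-3"] Ym3 Edn[of "-5"] Edn[of "-3"] by simp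
  have s0: "E (-2) = 0" using hY[of "-2"] Ym2 Edn[of "-4"] by simp
  have Em1: "E (-1) = 0" using hE[of "-1"] s0 by simp
  have Ez: "E 0 = 0" using hE[of 0] Em1 by simp
  have E1: "E 1 = 0" using hE[of 1] Ez by simp
  have Eall: "E x = 0" for x
  proof -
    consider "x \<le> -3" | "x = -2" | "x = -1" | "x = 0" | "x = 1" | "x \<ge> 2" by linarith
    then show ?thesis by cases (use Eup Edn s0 Em1 Ez E1 in auto)
  qed
  define q where "q = Z 1"
  have Z0: "Z 0 = -4*q" using hZ[of 1] Eall[of 1] by (simp add: q_def algebra_simps; algebra)
  have Zm1: "Z (-1) = 6*q" using hZ[of 0] Eall[of 0] Z0 by (simp add: algebra_simps; algebra)
  have Zm2: "Z (-2) = -4*q" using hZ[of "-1"] Eall[of "-1"] Zm1 by (simp add: algebra_simps; algebra)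
  have Zm3: "Z (-3) = q" using hZ[of "-2"] Eall[of "-2"] Zm2 by (simp add: algebra_simps; algebra)
  define p where "p = Y (-1)"
  have Y0: "Y 0 = -4*p" using hY[of "-1"] Eall[of "-3"] Eall[of "-1"] by (simp add: p_def algebra_simps; algebra)
  have Y1: "Y 1 = 6*p" using hY[of 0] Eall[of "-2"] Eall[of 0] Y0 by (simp add: algebra_simps; algebra)
  have Y2: "Y 2 = -4*p" using hY[of 1] Eall[of "-1"] Eall[of 1] Y1 by (simp add: algebra_simps; algebra)
  have Y3: "Y 3 = p" using hY[of 2] Eall[of 0] Eall[of 2] Y2 by (simp add: algebra_simps; algebra)
  have pq: "p = -q" using hYZ[of 1] Zm1 Y3 Y1 by (simp add: q_def algebra_simps; algebra)
  define t where "t = p"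
  define e' where "e' = (\<lambda>m x. e m x - t * Lop m 0 Om x)"
  have rele': "of_int (m-n) * e' (m+n) x = Lop m n (e' n) x - Lop n m (e' m) x" for m n x
  proof -
    have "of_int (m-n) * e' (m+n) x = of_int (m-n) * e (m+n) x - t * (of_int (m-n) * Lop (m+n) 0 Om x)"
      by (simp add: e'_def algebra_simps)
    also have "\<dots> = (Lop m n (e n) x - Lop n m (e m) x) - t * (Lop m n (Lop n 0 Om) x - Lop n m (Lop m 0 Om) x)"
      using rele cob_Lop by simp
    also have "\<dots> = Lop m n (e' n) x - Lop n m (e' m) x"
      by (simp add: e'_def Lop_diff Lop_scale algebra_simps)
    finally show ?thesis .
  qed
  have g0: "e' 0 x = 0" for x by (simp add: e'_def e0 Lop0)
  have g1: "e' 1 x = 0" for x by (simp add: e'_def e1 Om_L1)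
  have gm1: "e' (-1) x = 0" for x by (simp add: e'_def Om_Lm1 Eall flip: E_def)
  have g2: "e' 2 x = 0" for x
  proof -
    have "Y x = p * Yv x"
    proof -
      consider "x \<le> -4" | "x = -3" | "x = -2" | "x = -1" | "x = 0" | "x = 1" | "x = 2" | "x = 3" | "x \<ge> 4" by linarith
      then show ?thesis by cases (use Ytail Ym3 Ym2 Y0 Y1 Y2 Y3 in \<open>auto simp: Yv_def p_def\<close>)
    qed
    then show ?thesis by (simp add: e'_def Om_L2 t_def flip: Y_def)
  qed
  have gm2: "e' (-2) x = 0" for x
  proof -
    have "Z x = q * Yv (x+2)"
    proof -
      consider "x \<le> -4" | "x = -3" | "x = -2" | "x = -1" | "x = 0" | "x = 1" | "x \<ge> 2" by linarith
      then show ?thesis by cases (use Zdn Zup Zm3 Zm2 Zm1 Z0 in \<open>auto simp: Yv_def q_def\<close>)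
    qed
    then show ?thesis by (simp add: e'_def Om_Lm2 t_def pq flip: Z_def)
  qed
  have gpos: "e' m x = 0" if "m \<ge> 2" for m x
    using that
  proof (induction m arbitrary: x rule: int_ge_induct)
    case base then show ?case by (rule g2)
  next
    case (step i)
    have "of_int (1-i) * e' (1+i) x = Lop 1 i (e' i) x - Lop i 1 (e' 1) x" by (rule rele')
    also have "\<dots> = 0" using step g1 by (simp add: Lop_def)
    finally have h: "of_int (1-i) * e' (1+i) x = 0" .
    have nz: "(of_int (1-i)::complex) \<noteq> 0" using step(1) by (subst of_int_eq_0_iff) simp
    have "e' (1+i) x = 0" using h nz by simp
    then show ?case by (simp add: add.commute)
  qed
  have gneg: "e' m x = 0" if "m \<le> -2" for m x
    using that
  proof (induction m arbitrary: x rule: int_le_induct)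
    case base then show ?case by (rule gm2)
  next
    case (step i)
    have "of_int (-1-i) * e' (-1+i) x = Lop (-1) i (e' i) x - Lop i (-1) (e' (-1)) x" by (rule rele')
    also have "\<dots> = 0" using step gm1 by (simp add: Lop_def)
    finally have h: "of_int (-1-i) * e' (-1+i) x = 0" .
    have nz: "(of_int (-1-i)::complex) \<noteq> 0" using step(1) by (subst of_int_eq_0_iff) simp
    have "e' (-1+i) x = 0" using h nz by simp
    then show ?case by simp
  qed
  have gall: "e' m x = 0" for m x
  proof -
    consider "m \<le> -2" | "m = -1" | "m = 0" | "m = 1" | "m \<ge> 2" by linarith
    then show ?thesis by cases (use gneg gm1 g0 g1 gpos in auto)
  qed
  define c where "c = (\<lambda>x. c0 x + t * Om x)"
  have dc: "d m x = Lop m 0 c x" for m x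
    using gall[of m x] by (simp add: e'_def e_def c_def Lop_add Lop_scale; algebra)
  have "fs1 c"
  proof -
    obtain N1 where N1: "\<And>x. N1 < \<bar>x\<bar> \<Longrightarrow> d 1 x = 0" using fin[of 1] unfolding fs1_def by blast
    obtain N2 where N2: "\<And>x. N2 < \<bar>x\<bar> \<Longrightarrow> d 2 x = 0" using fin[of 2] unfolding fs1_def by blast
    show ?thesis unfolding fs1_def
    proof (intro exI allI impI)
      fix x assume x: "\<bar>N1\<bar> + \<bar>N2\<bar> + 3 < \<bar>x\<bar>"
      have "c ((x+2) - 2) = 0"
      proof (rule fin_tail)
        have a: "N1 < \<bar>x+2\<bar>" "N1 < \<bar>x+1\<bar>" "N2 < \<bar>x+2\<bar>" using x by arith+
        show "Lop 1 0 c (x+2) = 0" using N1[OF a(1)] dc[of 1 "x+2"] by simp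
        have eq: "x+2-1 = x+1" by simp
        have h: "Lop 1 0 c (x+1) = 0" using N1[OF a(2)] dc[of 1 "x+1"] by simp
        show "Lop 1 0 c (x+2-1) = 0" by (metis h eq)
        show "Lop 2 0 c (x+2) = 0" using N2[OF a(3)] dc[of 2 "x+2"] by simp
      qed
      then show "c x = 0" by simp
    qed
  qed
  then show ?thesis using dc by blast
qed




type_synonym f2 = "int \<times> int \<Rightarrow> complex"

definition Pop :: "int \<Rightarrow> f2 \<Rightarrow> int \<times> int \<Rightarrow> complex" where
  "Pop m t p = of_int (2*m - fst p) * t (fst p - m, snd p)"
definition Qop :: "int \<Rightarrow> f2 \<Rightarrow> int \<times> int \<Rightarrow> complex" where
  "Qop m t p = of_int (2*m - snd p) * t (fst p, snd p - m)"
definition Aw :: "int \<Rightarrow> f2 \<Rightarrow> int \<times> int \<Rightarrow> complex" where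
  "Aw m t p = Pop m t p + Qop m t p"

definition fs2 :: "f2 \<Rightarrow> bool" where "fs2 t \<longleftrightarrow> finite {p. t p \<noteq> 0}"

lemma Pop_lin: "Pop m (\<lambda>q. a * f q + b * g q) p = a * Pop m f p + b * Pop m g p"
  by (simp add: Pop_def algebra_simps)
lemma Qop_lin: "Qop m (\<lambda>q. a * f q + b * g q) p = a * Qop m f p + b * Qop m g p"
  by (simp add: Qop_def algebra_simps)
lemma Pop_diff: "Pop m (\<lambda>q. f q - g q) p = Pop m f p - Pop m g p"
  by (simp add: Pop_def algebra_simps)
lemma Qop_diff: "Qop m (\<lambda>q. f q - g q) p = Qop m f p - Qop m g p"
  by (simp add: Qop_def algebra_simps)
lemma Pop_add: "Pop m (\<lambda>q. f q + g q) p = Pop m f p + Pop m g p"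
  by (simp add: Pop_def algebra_simps)
lemma Qop_add: "Qop m (\<lambda>q. f q + g q) p = Qop m f p + Qop m g p"
  by (simp add: Qop_def algebra_simps)
lemma Aw_diff: "Aw m (\<lambda>q. f q - g q) p = Aw m f p - Aw m g p"
  by (simp add: Aw_def Pop_diff Qop_diff)
lemma Aw_add: "Aw m (\<lambda>q. f q + g q) p = Aw m f p + Aw m g p"
  by (simp add: Aw_def Pop_add Qop_add)

lemma cob_Pop: "of_int (m-n) * Pop (m+n) r p = Pop m (Pop n r) p - Pop n (Pop m r) p"
proof -
  have e: "fst p - m - n = fst p - (m+n)" "fst p - n - m = fst p - (m+n)" by auto
  show ?thesis unfolding Pop_def by (simp add: e algebra_simps)
qed
lemma cob_Qop: "of_int (m-n) * Qop (m+n) r p = Qop m (Qop n r) p - Qop n (Qop m r) p"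
proof -
  have e: "snd p - m - n = snd p - (m+n)" "snd p - n - m = snd p - (m+n)" by auto
  show ?thesis unfolding Qop_def by (simp add: e algebra_simps)
qed
lemma PQ_comm: "Pop m (Qop n r) p = Qop n (Pop m r) p"
  by (simp add: Pop_def Qop_def algebra_simps)

lemma Pop_Aw_lin: "Pop m (\<lambda>q. f q + g q) p = Pop m f p + Pop m g p" by (rule Pop_add)

lemma cob_Aw: "of_int (m-n) * Aw (m+n) r p = Aw m (Aw n r) p - Aw n (Aw m r) p"
proof -
  have "Aw m (Aw n r) p = Pop m (Pop n r) p + Pop m (Qop n r) p + Qop m (Pop n r) p + Qop m (Qop n r) p"
    unfolding Aw_def[of n] by (simp add: Aw_def Pop_add Qop_add)
  moreover have "Aw n (Aw m r) p = Pop n (Pop m r) p + Pop n (Qop m r) p + Qop n (Pop m r) p + Qop n (Qop m r) p"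
    unfolding Aw_def[of m] by (simp add: Aw_def Pop_add Qop_add)
  ultimately show ?thesis using cob_Pop[of m n r p] cob_Qop[of m n r p] PQ_comm[of m n r p] PQ_comm[of n m r p]
    by (simp add: Aw_def algebra_simps)
qed

lemma fs2_subset: "fs2 g \<Longrightarrow> (\<And>p. f p \<noteq> 0 \<Longrightarrow> g p \<noteq> 0) \<Longrightarrow> fs2 f"
  unfolding fs2_def by (metis (mono_tags, lifting) finite_subset mem_Collect_eq subsetI)

lemma fs2_add: "fs2 f \<Longrightarrow> fs2 g \<Longrightarrow> fs2 (\<lambda>p. f p + g p)"
proof -
  assume a: "fs2 f" "fs2 g"
  have "{p. f p + g p \<noteq> 0} \<subseteq> {p. f p \<noteq> 0} \<union> {p. g p \<noteq> 0}" by auto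
  then show ?thesis using a unfolding fs2_def by (meson finite_UnI finite_subset)
qed
lemma fs2_diff: "fs2 f \<Longrightarrow> fs2 g \<Longrightarrow> fs2 (\<lambda>p. f p - g p)"
proof -
  assume a: "fs2 f" "fs2 g"
  have "{p. f p - g p \<noteq> 0} \<subseteq> {p. f p \<noteq> 0} \<union> {p. g p \<noteq> 0}" by auto
  then show ?thesis using a unfolding fs2_def by (meson finite_UnI finite_subset)
qed

lemma fs2_Pop: "fs2 t \<Longrightarrow> fs2 (Pop m t)"
proof -
  assume a: "fs2 t"
  have "{p. Pop m t p \<noteq> 0} \<subseteq> (\<lambda>q. (fst q + m, snd q)) ` {p. t p \<noteq> 0}"
  proof
    fix p assume "p \<in> {p. Pop m t p \<noteq> 0}"
    then have "t (fst p - m, snd p) \<noteq> 0" by (auto simp: Pop_def)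
    then show "p \<in> (\<lambda>q. (fst q + m, snd q)) ` {p. t p \<noteq> 0}"
      by (intro image_eqI[of _ _ "(fst p - m, snd p)"]) auto
  qed
  then show ?thesis using a unfolding fs2_def by (meson finite_imageI finite_subset)
qed
lemma fs2_Qop: "fs2 t \<Longrightarrow> fs2 (Qop m t)"
proof -
  assume a: "fs2 t"
  have "{p. Qop m t p \<noteq> 0} \<subseteq> (\<lambda>q. (fst q, snd q + m)) ` {p. t p \<noteq> 0}"
  proof
    fix p assume "p \<in> {p. Qop m t p \<noteq> 0}"
    then have "t (fst p, snd p - m) \<noteq> 0" by (auto simp: Qop_def)
    then show "p \<in> (\<lambda>q. (fst q, snd q + m)) ` {p. t p \<noteq> 0}"
      by (intro image_eqI[of _ _ "(fst p, snd p - m)"]) auto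
  qed
  then show ?thesis using a unfolding fs2_def by (meson finite_imageI finite_subset)
qed
lemma fs2_Aw: "fs2 t \<Longrightarrow> fs2 (Aw m t)"
  unfolding Aw_def[abs_def] by (intro fs2_add fs2_Pop fs2_Qop)

lemma fs1_of_finite: "finite {x. g x \<noteq> 0} \<Longrightarrow> fs1 g"
proof -
  assume f: "finite {x. g x \<noteq> 0}"
  define N where "N = (\<Sum>x\<in>{x. g x \<noteq> 0}. \<bar>x\<bar>)"
  show ?thesis unfolding fs1_def
  proof (intro exI allI impI)
    fix x assume x: "N < \<bar>x\<bar>"
    show "g x = 0"
    proof (rule ccontr)
      assume "g x \<noteq> 0"
      then have "\<bar>x\<bar> \<le> N" unfolding N_def using f by (intro member_le_sum) auto
      then show False using x by simp
    qed
  qed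
qed

lemma fs1_finite: "fs1 c \<Longrightarrow> finite {x. c x \<noteq> 0}"
proof -
  assume "fs1 c"
  then obtain N where N: "\<And>x. N < \<bar>x\<bar> \<Longrightarrow> c x = 0" unfolding fs1_def by blast
  have "{x. c x \<noteq> 0} \<subseteq> {-N..N}" using N by force
  then show ?thesis by (rule finite_subset) simp
qed

lemma exists_avoid:
  fixes S :: "int set"
  assumes "finite S" shows "\<exists>m. m \<notin> S"
  using assms ex_new_if_finite infinite_UNIV_int by blast

lemma Aw0: "Aw 0 t p = - of_int (fst p + snd p) * t p"
  by (simp add: Aw_def Pop_def Qop_def algebra_simps)

lemma witt2:
  fixes f :: "int \<Rightarrow> f2"
  assumes fin: "\<And>m. fs2 (f m)"
    and rel: "\<And>m n p. of_int (m-n) * f (m+n) p = Aw m (f n) p - Aw n (f m) p"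
  shows "\<exists>r. fs2 r \<and> (\<forall>m p. f m p = Aw m r p)"
proof -
  define u where "u = f 0"
  define r0 where "r0 = (\<lambda>p. if fst p + snd p \<noteq> 0 then - u p / of_int (fst p + snd p) else 0)"
  have fr0: "fs2 r0" using fin[of 0] unfolding u_def by (rule fs2_subset) (auto simp: r0_def u_def split: if_splits)
  define g where "g = (\<lambda>m p. f m p - Aw m r0 p)"
  have fg: "fs2 (g m)" for m unfolding g_def using fin fr0 by (intro fs2_diff fs2_Aw)
  have relg: "of_int (m-n) * g (m+n) p = Aw m (g n) p - Aw n (g m) p" for m n p
  proof -
    have "of_int (m-n) * g (m+n) p = of_int (m-n) * f (m+n) p - of_int (m-n) * Aw (m+n) r0 p"
      by (simp add: g_def algebra_simps)
    also have "\<dots> = (Aw m (f n) p - Aw n (f m) p) - (Aw m (Aw n r0) p - Aw n (Aw m r0) p)"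
      using rel cob_Aw by simp
    also have "\<dots> = Aw m (g n) p - Aw n (g m) p" by (simp add: g_def Aw_diff)
    finally show ?thesis .
  qed
  have g0: "g 0 p = (if fst p + snd p = 0 then u p else 0)" for p
  proof (cases "fst p + snd p = 0")
    case True then show ?thesis by (simp add: g_def Aw0 r0_def u_def)
  next
    case False
    then have nz: "(of_int (fst p + snd p)::complex) \<noteq> 0" by (subst of_int_eq_0_iff)
    show ?thesis using False nz by (simp add: g_def Aw0 r0_def u_def field_simps del: of_int_add)
  qed
  have g0supp: "g 0 p = 0" if "fst p + snd p \<noteq> 0" for p using g0 that by simp
  have Awg0: "Aw m (g 0) p = 0" if "fst p + snd p \<noteq> m" for m p
    using that by (simp add: Aw_def Pop_def Qop_def g0supp)
  have key: "of_int (m - (fst p + snd p)) * g m p = Aw m (g 0) p" for m p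
    using relg[of m 0 p] by (simp add: Aw0 algebra_simps)
  have gsupp: "g m p = 0" if "fst p + snd p \<noteq> m" for m p
  proof -
    have "of_int (m - (fst p + snd p)) * g m p = 0" using key Awg0 that by simp
    moreover have "(of_int (m - (fst p + snd p)) :: complex) \<noteq> 0" using that by (subst of_int_eq_0_iff) simp
    ultimately show ?thesis by simp
  qed
  have Awg0': "Aw m (g 0) p = 0" for m p
  proof (cases "fst p + snd p = m")
    case True then show ?thesis using key[of m p] by simp
  next
    case False then show ?thesis by (rule Awg0)
  qed
  have g0z: "g 0 p = 0" for p
  proof -
    obtain b1 b2 where p: "p = (b1, b2)" by fastforce
    define S where "S = {q. g 0 q \<noteq> 0}"
    have fS: "finite S" using fg[of 0] by (simp add: fs2_def S_def)
    have "finite ((\<lambda>q. fst q - b1) ` S \<union> {b1})" using fS by simp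
    then obtain m where m: "m \<notin> (\<lambda>q. fst q - b1) ` S \<union> {b1}" using exists_avoid by blast
    have "g 0 (b1 + m, b2 - m) = 0"
    proof (rule ccontr)
      assume "g 0 (b1 + m, b2 - m) \<noteq> 0"
      then have "(b1+m, b2-m) \<in> S" by (simp add: S_def)
      then have "m \<in> (\<lambda>q. fst q - b1) ` S" by (intro image_eqI[of _ _ "(b1+m, b2-m)"]) auto
      then show False using m by simp
    qed
    moreover have "Aw m (g 0) (b1 + m, b2) = 0" by (rule Awg0')
    ultimately have "of_int (m - b1) * g 0 (b1, b2) = 0" by (simp add: Aw_def Pop_def Qop_def)
    moreover have "(of_int (m - b1) :: complex) \<noteq> 0" using m by (subst of_int_eq_0_iff) simp
    ultimately show ?thesis using p by simp
  qed
  define d where "d = (\<lambda>m x. g m (x, m - x))"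
  have fd: "fs1 (d m)" for m
  proof (rule fs1_of_finite)
    have "{x. d m x \<noteq> 0} \<subseteq> fst ` {p. g m p \<noteq> 0}" by (force simp: d_def)
    then show "finite {x. d m x \<noteq> 0}" using fg[of m] unfolding fs2_def by (meson finite_imageI finite_subset)
  qed
  have d0: "d 0 x = 0" for x by (simp add: d_def g0z)
  have reld: "of_int (m-n) * d (m+n) x = Lop m n (d n) x - Lop n m (d m) x" for m n x
  proof -
    have h: "of_int (m-n) * g (m+n) (x, m+n-x) = Aw m (g n) (x, m+n-x) - Aw n (g m) (x, m+n-x)" by (rule relg)
    have a1: "Aw m (g n) (x, m+n-x) = Lop m n (d n) x"
    proof -
      have "(x - m, m + n - x) = (x - m, n - (x - m))" "(x, m + n - x - m) = (x, n - x)" by auto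
      then show ?thesis by (simp add: Aw_def Pop_def Qop_def Lop_def d_def algebra_simps)
    qed
    have a2: "Aw n (g m) (x, m+n-x) = Lop n m (d m) x"
    proof -
      have "(x - n, m + n - x) = (x - n, m - (x - n))" "(x, m + n - x - n) = (x, m - x)" by auto
      then show ?thesis by (simp add: Aw_def Pop_def Qop_def Lop_def d_def algebra_simps)
    qed
    show ?thesis using h a1 a2 by (simp add: d_def)
  qed
  obtain c where fc: "fs1 c" and dc: "\<And>m x. d m x = Lop m 0 c x"
    using witt_core[OF fd d0 reld] by blast
  define r1 where "r1 = (\<lambda>p. if fst p + snd p = 0 then c (fst p) else 0)"
  have fr1: "fs2 r1"
  proof -
    have "{p. r1 p \<noteq> 0} \<subseteq> (\<lambda>x. (x, -x)) ` {x. c x \<noteq> 0}"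
    proof
      fix p assume "p \<in> {p. r1 p \<noteq> 0}"
      then have "fst p + snd p = 0" "c (fst p) \<noteq> 0" by (auto simp: r1_def split: if_splits)
      then show "p \<in> (\<lambda>x. (x, -x)) ` {x. c x \<noteq> 0}"
        by (intro image_eqI[of _ _ "fst p"]) (auto simp: prod_eq_iff)
    qed
    then show ?thesis unfolding fs2_def using fs1_finite[OF fc] by (meson finite_imageI finite_subset)
  qed
  have r1g: "Aw m r1 p = g m p" for m p
  proof (cases "fst p + snd p = m")
    case True
    obtain a1 a2 where p: "p = (a1, a2)" by fastforce
    have a2: "a2 = m - a1" using True p by simp
    have "Aw m r1 p = Lop m 0 c a1" using p by (simp add: a2 Aw_def Pop_def Qop_def r1_def Lop_def algebra_simps)
    also have "\<dots> = g m p" using dc[of m a1] a2 p by (simp add: d_def)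
    finally show ?thesis .
  next
    case False
    then show ?thesis using gsupp[OF False] by (simp add: Aw_def Pop_def Qop_def r1_def)
  qed
  define r where "r = (\<lambda>p. r0 p + r1 p)"
  have "fs2 r" unfolding r_def using fr0 fr1 by (rule fs2_add)
  moreover have "f m p = Aw m r p" for m p
    using r1g[of m p] by (simp add: r_def Aw_add g_def)
  ultimately show ?thesis by blast
qed

lemma Pop0: "Pop 0 t p = - of_int (fst p) * t p" by (simp add: Pop_def)
lemma Qop0: "Qop 0 t p = - of_int (snd p) * t p" by (simp add: Qop_def)

lemma ofint_nz: "(k::int) \<noteq> 0 \<Longrightarrow> (of_int k :: complex) \<noteq> 0" by simp

lemma cross2:
  fixes u v :: "int \<Rightarrow> f2"
  assumes fu: "\<And>m. fs2 (u m)" and fv: "\<And>m. fs2 (v m)"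
    and ru: "\<And>m n p. of_int (m-n) * u (m+n) p = Pop m (u n) p - Pop n (u m) p"
    and rv: "\<And>m n p. of_int (m-n) * v (m+n) p = Qop m (v n) p - Qop n (v m) p"
    and ruv: "\<And>m n p. Pop m (v n) p = Qop n (u m) p"
  shows "\<exists>r. fs2 r \<and> (\<forall>m p. u m p = Pop m r p \<and> v m p = Qop m r p)"
proof -
  define r0 where "r0 = (\<lambda>p. if fst p \<noteq> 0 then - u 0 p / of_int (fst p)
      else if snd p \<noteq> 0 then - v 0 p / of_int (snd p) else 0)"
  have fr0: "fs2 r0"
  proof -
    have "{p. r0 p \<noteq> 0} \<subseteq> {p. u 0 p \<noteq> 0} \<union> {p. v 0 p \<noteq> 0}" by (auto simp: r0_def split: if_splits)
    then show ?thesis using fu[of 0] fv[of 0] unfolding fs2_def by (meson finite_UnI finite_subset)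
  qed
  define u' where "u' = (\<lambda>m p. u m p - Pop m r0 p)"
  define v' where "v' = (\<lambda>m p. v m p - Qop m r0 p)"
  have ru': "of_int (m-n) * u' (m+n) p = Pop m (u' n) p - Pop n (u' m) p" for m n p
  proof -
    have "of_int (m-n) * u' (m+n) p = of_int (m-n) * u (m+n) p - of_int (m-n) * Pop (m+n) r0 p"
      by (simp add: u'_def algebra_simps)
    also have "\<dots> = (Pop m (u n) p - Pop n (u m) p) - (Pop m (Pop n r0) p - Pop n (Pop m r0) p)"
      using ru cob_Pop by simp
    also have "\<dots> = Pop m (u' n) p - Pop n (u' m) p" by (simp add: u'_def Pop_diff)
    finally show ?thesis .
  qed
  have rv': "of_int (m-n) * v' (m+n) p = Qop m (v' n) p - Qop n (v' m) p" for m n p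
  proof -
    have "of_int (m-n) * v' (m+n) p = of_int (m-n) * v (m+n) p - of_int (m-n) * Qop (m+n) r0 p"
      by (simp add: v'_def algebra_simps)
    also have "\<dots> = (Qop m (v n) p - Qop n (v m) p) - (Qop m (Qop n r0) p - Qop n (Qop m r0) p)"
      using rv cob_Qop by simp
    also have "\<dots> = Qop m (v' n) p - Qop n (v' m) p" by (simp add: v'_def Qop_diff)
    finally show ?thesis .
  qed
  have ruv': "Pop m (v' n) p = Qop n (u' m) p" for m n p
    using ruv[of m n p] PQ_comm[of m n r0 p] by (simp add: u'_def v'_def Pop_diff Qop_diff)
  have h00: "of_int (fst p) * v 0 p = of_int (snd p) * u 0 p" for p
    using ruv[of 0 0 p] by (simp add: Pop0 Qop0)
  have u'0a: "u' 0 p = 0" if "p \<noteq> (0,0)" for p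
  proof (cases "fst p = 0")
    case False
    then have nz: "(of_int (fst p)::complex) \<noteq> 0" by simp
    show ?thesis using False nz by (simp add: u'_def Pop0 r0_def field_simps)
  next
    case True
    then have s: "snd p \<noteq> 0" using that by (simp add: prod_eq_iff)
    then have nz: "(of_int (snd p)::complex) \<noteq> 0" by simp
    have "u 0 p = 0" using h00[of p] True nz by simp
    then show ?thesis using True by (simp add: u'_def Pop0)
  qed
  have v'0a: "v' 0 p = 0" if "p \<noteq> (0,0)" for p
  proof (cases "fst p = 0")
    case False
    then have nz: "(of_int (fst p)::complex) \<noteq> 0" by simp
    have "v 0 p = of_int (snd p) * u 0 p / of_int (fst p)" using h00[of p] nz by (simp add: field_simps)
    then show ?thesis using False nz by (simp add: v'_def Qop0 r0_def field_simps)
  next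
    case True
    then have s: "snd p \<noteq> 0" using that by (simp add: prod_eq_iff)
    then have nz: "(of_int (snd p)::complex) \<noteq> 0" by simp
    show ?thesis using True s nz by (simp add: v'_def Qop0 r0_def field_simps)
  qed
  have u'00: "u' 0 (0,0) = 0" using ru'[of 1 0 "(1,0)"] by (simp add: Pop_def)
  have v'00: "v' 0 (0,0) = 0" using rv'[of 1 0 "(0,1)"] by (simp add: Qop_def)
  have u'0: "u' 0 p = 0" for p using u'0a u'00 by (cases "p = (0,0)") auto
  have v'0: "v' 0 p = 0" for p using v'0a v'00 by (cases "p = (0,0)") auto
  have usupp: "u' m p = 0" if "p \<noteq> (m,0)" for m p
  proof -
    have h1: "of_int (m - fst p) * u' m p = 0" using ru'[of m 0 p] u'0 by (simp add: Pop_def algebra_simps)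
    have h2: "of_int (snd p) * u' m p = 0" using ruv'[of m 0 p] v'0 by (simp add: Pop_def Qop_def)
    show ?thesis
    proof (cases "fst p = m")
      case True
      then have "snd p \<noteq> 0" using that by (auto simp: prod_eq_iff)
      then show ?thesis using h2 by simp
    next
      case False
      then have "(of_int (m - fst p) :: complex) \<noteq> 0" by (subst of_int_eq_0_iff) simp
      then show ?thesis using h1 by simp
    qed
  qed
  have vsupp: "v' m p = 0" if "p \<noteq> (0,m)" for m p
  proof -
    have h1: "of_int (m - snd p) * v' m p = 0" using rv'[of m 0 p] v'0 by (simp add: Qop_def algebra_simps)
    have h2: "of_int (fst p) * v' m p = 0" using ruv'[of 0 m p] u'0 by (simp add: Pop_def Qop_def)
    show ?thesis
    proof (cases "snd p = m")
      case True
      then have "fst p \<noteq> 0" using that by (auto simp: prod_eq_iff)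
      then show ?thesis using h2 by simp
    next
      case False
      then have "(of_int (m - snd p) :: complex) \<noteq> 0" by (subst of_int_eq_0_iff) simp
      then show ?thesis using h1 by simp
    qed
  qed
  have cr: "of_int m * v' n (0,n) = of_int n * u' m (m,0)" for m n
    using ruv'[of m n "(m,n)"] by (simp add: Pop_def Qop_def)
  define k where "k = v' 1 (0,1)"
  have uk: "u' m (m,0) = of_int m * k" for m using cr[of m 1] by (simp add: k_def)
  have vk: "v' n (0,n) = of_int n * k" for n using cr[of 1 n] uk[of 1] by simp
  define r1 :: f2 where "r1 = (\<lambda>p. if p = (0,0) then k else 0)"
  have fr1: "fs2 r1"
  proof -
    have "{p. r1 p \<noteq> 0} \<subseteq> {(0,0)}" by (auto simp: r1_def split: if_splits)
    then show ?thesis unfolding fs2_def by (meson finite.emptyI finite_insert finite_subset)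
  qed
  have Pr1: "Pop m r1 p = u' m p" for m p
  proof (cases "p = (m,0)")
    case True then show ?thesis using uk[of m] by (simp add: Pop_def r1_def)
  next
    case False then show ?thesis using usupp[OF False] by (auto simp: Pop_def r1_def prod_eq_iff)
  qed
  have Qr1: "Qop m r1 p = v' m p" for m p
  proof (cases "p = (0,m)")
    case True then show ?thesis using vk[of m] by (simp add: Qop_def r1_def)
  next
    case False then show ?thesis using vsupp[OF False] by (auto simp: Qop_def r1_def prod_eq_iff)
  qed
  define r where "r = (\<lambda>p. r0 p + r1 p)"
  have "fs2 r" unfolding r_def using fr0 fr1 by (rule fs2_add)
  moreover have "u m p = Pop m r p \<and> v m p = Qop m r p" for m p
    using Pr1[of m p] Qr1[of m p] by (simp add: r_def Pop_add Qop_add u'_def v'_def)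
  ultimately show ?thesis by blast
qed




lemma sum_fun_apply: "(\<Sum>i\<in>S. f i) x = (\<Sum>i\<in>S. f i x)"
  by (induction S rule: infinite_finite_induct) auto

lemma supp_basis: "supp (basis_vec i) = {i}"
  by (auto simp: supp_def basis_vec_def)

lemma basis_gW: "basis_vec i \<in> gW"
  by (simp add: gW_def supp_basis)

lemma sum_single:
  fixes h :: "'a \<Rightarrow> complex"
  assumes "finite S" "\<And>p. p \<noteq> pz \<Longrightarrow> h p = 0" "pz \<notin> S \<Longrightarrow> h pz = 0"
  shows "(\<Sum>p\<in>S. h p) = h pz"
proof (cases "pz \<in> S")
  case True
  have "(\<Sum>p\<in>S. h p) = h pz + (\<Sum>p\<in>S - {pz}. h p)" using assms(1) True by (simp add: sum.remove)
  also have "(\<Sum>p\<in>S - {pz}. h p) = 0" using assms(2) by (intro sum.neutral) auto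
  finally show ?thesis by simp
next
  case False
  then have "(\<Sum>p\<in>S. h p) = 0"
  proof (intro sum.neutral ballI)
    fix p assume "p \<in> S"
    then have "p \<noteq> pz" using False by auto
    then show "h p = 0" by (rule assms(2))
  qed
  then show ?thesis using assms(3) False by simp
qed

lemma bracket_basis_right:
  "bracket x (basis_vec j) k = (\<Sum>i\<in>supp x. x i * br_basis i j k)"
  unfolding bracket_def sum_fun_apply supp_basis by (simp add: basis_vec_def)

lemma bracket_basis: "bracket (basis_vec i) (basis_vec j) = br_basis i j"
  by (rule ext) (simp only: bracket_basis_right supp_basis, simp add: basis_vec_def)

definition Aop :: "idx \<Rightarrow> tens \<Rightarrow> tens" where
  "Aop i t q = (if fst (fst q) = fst i then of_int (2 * snd i - snd (fst q)) * t ((fst i, snd (fst q) - snd i), snd q) else 0)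
     + (if fst (snd q) = fst i then of_int (2 * snd i - snd (snd q)) * t (fst q, (fst i, snd (snd q) - snd i)) else 0)"

lemma act_expand:
  assumes "x \<in> gW"
  shows "act x t q = (\<Sum>i\<in>supp x. x i * act (basis_vec i) t q)"
proof -
  have fx: "finite (supp x)" using assms by (simp add: gW_def)
  have "act x t q = (\<Sum>p\<in>supp t. t p * (bracket x (basis_vec (fst p)) (fst q) * basis_vec (snd p) (snd q)
          + basis_vec (fst p) (fst q) * bracket x (basis_vec (snd p)) (snd q)))"
    unfolding act_def sum_fun_apply by (simp add: tensor_def case_prod_beta)
  also have "\<dots> = (\<Sum>p\<in>supp t. \<Sum>i\<in>supp x. x i * (t p * (br_basis i (fst p) (fst q) * basis_vec (snd p) (snd q)
          + basis_vec (fst p) (fst q) * br_basis i (snd p) (snd q))))"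
    by (simp add: bracket_basis_right sum_distrib_left sum_distrib_right sum.distrib algebra_simps)
  also have "\<dots> = (\<Sum>i\<in>supp x. x i * (\<Sum>p\<in>supp t. t p * (br_basis i (fst p) (fst q) * basis_vec (snd p) (snd q)
          + basis_vec (fst p) (fst q) * br_basis i (snd p) (snd q))))"
    by (subst sum.swap) (simp add: sum_distrib_left)
  also have "\<dots> = (\<Sum>i\<in>supp x. x i * act (basis_vec i) t q)"
    unfolding act_def sum_fun_apply by (simp add: tensor_def case_prod_beta bracket_basis)
  finally show ?thesis .
qed

lemma act_basis_form:
  "act (basis_vec i) t q = (\<Sum>p\<in>supp t. t p * (br_basis i (fst p) (fst q) * basis_vec (snd p) (snd q)))
     + (\<Sum>p\<in>supp t. t p * (basis_vec (fst p) (fst q) * br_basis i (snd p) (snd q)))"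
  unfolding act_def sum_fun_apply
  by (simp add: tensor_def case_prod_beta bracket_basis sum.distrib algebra_simps)

lemma act_basis:
  assumes ft: "finite (supp t)"
  shows "act (basis_vec i) t q = Aop i t q"
proof -
  obtain b m where i: "i = (b, m)" by fastforce
  obtain b1 a1 b2 a2 where q: "q = ((b1, a1), (b2, a2))" by (metis prod.collapse)
  define p1 where "p1 = ((b, a1 - m), (b2, a2))"
  define p2 where "p2 = ((b1, a1), (b, a2 - m))"
  have s1: "(\<Sum>p\<in>supp t. t p * (br_basis i (fst p) (fst q) * basis_vec (snd p) (snd q)))
        = t p1 * (br_basis i (fst p1) (fst q) * basis_vec (snd p1) (snd q))"
  proof (rule sum_single[OF ft])
    fix p assume np: "p \<noteq> p1"
    obtain c1 x1 c2 x2 where p: "p = ((c1, x1), (c2, x2))" by (metis prod.collapse)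
    show "t p * (br_basis i (fst p) (fst q) * basis_vec (snd p) (snd q)) = 0"
      using np unfolding p p1_def i q by (auto simp: br_basis_def basis_vec_def)
  next
    assume "p1 \<notin> supp t" then show "t p1 * (br_basis i (fst p1) (fst q) * basis_vec (snd p1) (snd q)) = 0"
      by (simp add: supp_def)
  qed
  have s2: "(\<Sum>p\<in>supp t. t p * (basis_vec (fst p) (fst q) * br_basis i (snd p) (snd q)))
        = t p2 * (basis_vec (fst p2) (fst q) * br_basis i (snd p2) (snd q))"
  proof (rule sum_single[OF ft])
    fix p assume np: "p \<noteq> p2"
    obtain c1 x1 c2 x2 where p: "p = ((c1, x1), (c2, x2))" by (metis prod.collapse)
    show "t p * (basis_vec (fst p) (fst q) * br_basis i (snd p) (snd q)) = 0"
      using np unfolding p p2_def i q by (auto simp: br_basis_def basis_vec_def)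
  next
    assume "p2 \<notin> supp t" then show "t p2 * (basis_vec (fst p2) (fst q) * br_basis i (snd p2) (snd q)) = 0"
      by (simp add: supp_def)
  qed
  show ?thesis unfolding act_basis_form s1 s2
    by (simp add: Aop_def i q p1_def p2_def br_basis_def basis_vec_def algebra_simps)
qed

lemma gW_add: "a \<in> gW \<Longrightarrow> b \<in> gW \<Longrightarrow> a + b \<in> gW"
proof -
  assume a: "a \<in> gW" "b \<in> gW"
  have "supp (a + b) \<subseteq> supp a \<union> supp b" by (auto simp: supp_def)
  then show ?thesis using a unfolding gW_def by (auto intro: finite_subset)
qed

lemma gW_zero: "(0::elt) \<in> gW" by (simp add: gW_def supp_def)

lemma gW_scale_basis: "(\<lambda>k. c * basis_vec i k) \<in> gW"
proof -
  have "supp (\<lambda>k. c * basis_vec i k) \<subseteq> {i}" by (auto simp: supp_def basis_vec_def)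
  then show ?thesis unfolding gW_def by (auto intro: finite_subset)
qed

lemma gW_sum: "finite S \<Longrightarrow> (\<And>i. i \<in> S \<Longrightarrow> g i \<in> gW) \<Longrightarrow> (\<Sum>i\<in>S. g i) \<in> gW"
  by (induction S rule: finite_induct) (auto intro: gW_add gW_zero)

lemma Wedge2_fin: "t \<in> Wedge2 \<Longrightarrow> finite (supp t)"
proof (induction rule: Wedge2.induct)
  case zero then show ?case by (simp add: supp_def)
next
  case (add a b t)
  have "supp (wedge a b + t) \<subseteq> (supp a \<times> supp b) \<union> (supp b \<times> supp a) \<union> supp t"
    by (auto simp: supp_def wedge_def tensor_def)
  moreover have "finite ((supp a \<times> supp b) \<union> (supp b \<times> supp a) \<union> supp t)"
    using add by (simp add: gW_def)
  ultimately show ?case by (rule finite_subset)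
qed

lemma Wedge2_antisym: "t \<in> Wedge2 \<Longrightarrow> t (p, q) = - t (q, p)"
proof (induction rule: Wedge2.induct)
  case zero then show ?case by simp
next
  case (add a b t) then show ?case by (simp add: wedge_def tensor_def)
qed

lemma Wedge2_sum:
  "finite S \<Longrightarrow> (\<And>s. s \<in> S \<Longrightarrow> a s \<in> gW \<and> b s \<in> gW) \<Longrightarrow> (\<Sum>s\<in>S. wedge (a s) (b s)) \<in> Wedge2"
proof (induction S rule: finite_induct)
  case empty then show ?case by (metis sum.empty Wedge2.zero)
next
  case (insert x F)
  have "(\<Sum>s\<in>insert x F. wedge (a s) (b s)) = wedge (a x) (b x) + (\<Sum>s\<in>F. wedge (a s) (b s))"
    by (simp only: sum.insert[OF insert(1,2)])
  also have "\<dots> \<in> Wedge2" using insert by (intro Wedge2.add) auto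
  finally show ?case .
qed

lemma elt_expand: "x \<in> gW \<Longrightarrow> x = (\<Sum>i\<in>supp x. (\<lambda>k. x i * basis_vec i k))"
proof (rule ext)
  fix k assume x: "x \<in> gW"
  have f: "finite (supp x)" using x by (simp add: gW_def)
  have "(\<Sum>i\<in>supp x. (\<lambda>k. x i * basis_vec i k)) k = (\<Sum>i\<in>supp x. x i * basis_vec i k)"
    by (simp add: sum_fun_apply)
  also have "\<dots> = x k * basis_vec k k"
    by (rule sum_single[OF f]) (auto simp: basis_vec_def supp_def)
  finally show "x k = (\<Sum>i\<in>supp x. (\<lambda>k. x i * basis_vec i k)) k" by (simp add: basis_vec_def)
qed

lemma cocycle_parts:
  assumes "is_cocycle \<delta>"
  shows "\<And>x. x \<in> gW \<Longrightarrow> \<delta> x \<in> Wedge2"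
    and "\<And>x y. x \<in> gW \<Longrightarrow> y \<in> gW \<Longrightarrow> \<delta> (x + y) = \<delta> x + \<delta> y"
    and "\<And>c x. x \<in> gW \<Longrightarrow> \<delta> (\<lambda>k. c * x k) = (\<lambda>q. c * \<delta> x q)"
    and "\<And>x y. x \<in> gW \<Longrightarrow> y \<in> gW \<Longrightarrow> \<delta> (bracket x y) = act x (\<delta> y) - act y (\<delta> x)"
  using assms unfolding is_cocycle_def by blast+

lemma delta_sum:
  assumes c: "is_cocycle \<delta>"
  shows "finite S \<Longrightarrow> (\<And>i. i \<in> S \<Longrightarrow> g i \<in> gW) \<Longrightarrow> \<delta> (\<Sum>i\<in>S. g i) = (\<Sum>i\<in>S. \<delta> (g i))"
proof (induction S rule: finite_induct)
  case empty
  have "\<delta> (\<lambda>k. 0 * (0::elt) k) = (\<lambda>q. 0 * \<delta> 0 q)" using cocycle_parts(3)[OF c gW_zero] .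
  then show ?case by (simp add: zero_fun_def)
next
  case (insert x F)
  have gx: "g x \<in> gW" using insert by simp
  have gF: "sum g F \<in> gW" using insert by (intro gW_sum) auto
  have "\<delta> (sum g (insert x F)) = \<delta> (g x + sum g F)" by (simp only: sum.insert[OF insert(1,2)])
  also have "\<dots> = \<delta> (g x) + \<delta> (sum g F)" by (rule cocycle_parts(2)[OF c gx gF])
  also have "\<dots> = \<delta> (g x) + (\<Sum>i\<in>F. \<delta> (g i))" using insert by simp
  also have "\<dots> = (\<Sum>i\<in>insert x F. \<delta> (g i))" by (simp only: sum.insert[OF insert(1,2)])
  finally show ?case .
qed

lemma delta_expand:
  assumes c: "is_cocycle \<delta>" and x: "x \<in> gW"
  shows "\<delta> x q = (\<Sum>i\<in>supp x. x i * \<delta> (basis_vec i) q)"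
proof -
  have f: "finite (supp x)" using x by (simp add: gW_def)
  have "\<delta> x = \<delta> (\<Sum>i\<in>supp x. (\<lambda>k. x i * basis_vec i k))" using elt_expand[OF x] by simp
  also have "\<dots> = (\<Sum>i\<in>supp x. \<delta> (\<lambda>k. x i * basis_vec i k))"
    by (rule delta_sum[OF c f]) (rule gW_scale_basis)
  also have "\<dots> = (\<Sum>i\<in>supp x. (\<lambda>q. x i * \<delta> (basis_vec i) q))"
    using cocycle_parts(3)[OF c basis_gW] by simp
  finally show ?thesis by (simp add: sum_fun_apply)
qed

lemma D_fin: "is_cocycle \<delta> \<Longrightarrow> finite (supp (\<delta> (basis_vec i)))"
  using cocycle_parts(1) basis_gW Wedge2_fin by blast

lemma D_rel_same:
  assumes c: "is_cocycle \<delta>"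
  shows "of_int (m-n) * \<delta> (basis_vec (b, m+n)) q
     = Aop (b,m) (\<delta> (basis_vec (b,n))) q - Aop (b,n) (\<delta> (basis_vec (b,m))) q"
proof -
  have br: "bracket (basis_vec (b,m)) (basis_vec (b,n)) = (\<lambda>k. of_int (m-n) * basis_vec (b, m+n) k)"
    by (rule ext) (simp add: bracket_basis br_basis_def)
  have "\<delta> (bracket (basis_vec (b,m)) (basis_vec (b,n)))
      = act (basis_vec (b,m)) (\<delta> (basis_vec (b,n))) - act (basis_vec (b,n)) (\<delta> (basis_vec (b,m)))"
    by (rule cocycle_parts(4)[OF c basis_gW basis_gW])
  then have "(\<lambda>q. of_int (m-n) * \<delta> (basis_vec (b, m+n)) q)
      = act (basis_vec (b,m)) (\<delta> (basis_vec (b,n))) - act (basis_vec (b,n)) (\<delta> (basis_vec (b,m)))"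
    unfolding br cocycle_parts(3)[OF c basis_gW] .
  then have "of_int (m-n) * \<delta> (basis_vec (b, m+n)) q
      = act (basis_vec (b,m)) (\<delta> (basis_vec (b,n))) q - act (basis_vec (b,n)) (\<delta> (basis_vec (b,m))) q"
    by (metis minus_apply)
  then show ?thesis using act_basis D_fin[OF c] by simp
qed

lemma D_rel_diff:
  assumes c: "is_cocycle \<delta>" and bb: "b \<noteq> b'"
  shows "Aop (b,m) (\<delta> (basis_vec (b',n))) q = Aop (b',n) (\<delta> (basis_vec (b,m))) q"
proof -
  have br: "bracket (basis_vec (b,m)) (basis_vec (b',n)) = (\<lambda>k. 0 * basis_vec (b, m) k)"
    by (rule ext) (simp add: bracket_basis br_basis_def bb)
  have "\<delta> (bracket (basis_vec (b,m)) (basis_vec (b',n)))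
      = act (basis_vec (b,m)) (\<delta> (basis_vec (b',n))) - act (basis_vec (b',n)) (\<delta> (basis_vec (b,m)))"
    by (rule cocycle_parts(4)[OF c basis_gW basis_gW])
  then have "(\<lambda>q. 0 * \<delta> (basis_vec (b, m)) q)
      = act (basis_vec (b,m)) (\<delta> (basis_vec (b',n))) - act (basis_vec (b',n)) (\<delta> (basis_vec (b,m)))"
    unfolding br cocycle_parts(3)[OF c basis_gW] .
  then have "0 = act (basis_vec (b,m)) (\<delta> (basis_vec (b',n))) q - act (basis_vec (b',n)) (\<delta> (basis_vec (b,m))) q"
    by (metis minus_apply mult_zero_left)
  then show ?thesis using act_basis D_fin[OF c] by simp
qed

definition proj :: "bool \<Rightarrow> bool \<Rightarrow> tens \<Rightarrow> f2" where
  "proj b1 b2 t p = t ((b1, fst p), (b2, snd p))"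

lemma proj_Aop: "proj b1 b2 (Aop (b,m) t) p
   = (if b1 = b then Pop m (proj b1 b2 t) p else 0) + (if b2 = b then Qop m (proj b1 b2 t) p else 0)"
  by (simp add: proj_def Aop_def Pop_def Qop_def)

lemma fs2_proj: "finite (supp t) \<Longrightarrow> fs2 (proj b1 b2 t)"
proof -
  assume f: "finite (supp t)"
  have "{p. proj b1 b2 t p \<noteq> 0} \<subseteq> (\<lambda>pq. (snd (fst pq), snd (snd pq))) ` supp t"
  proof
    fix p assume "p \<in> {p. proj b1 b2 t p \<noteq> 0}"
    then show "p \<in> (\<lambda>pq. (snd (fst pq), snd (snd pq))) ` supp t"
      by (intro image_eqI[of _ _ "((b1, fst p), (b2, snd p))"]) (auto simp: proj_def supp_def)
  qed
  then show ?thesis unfolding fs2_def using f by (meson finite_imageI finite_subset)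
qed

lemma wedge_at: "wedge a b (x, y) = a x * b y - b x * a y"
  by (simp add: wedge_def tensor_def)
lemma basis_at: "basis_vec i k = (if k = i then 1 else 0)" by (simp add: basis_vec_def)
lemma wedge_basis_at:
  "wedge (\<lambda>k. c * basis_vec (fst pq) k) (basis_vec (snd pq)) (x, y)
     = (if pq = (x,y) then c else 0) - (if pq = (y,x) then c else 0)"
proof -
  obtain a b where pq: "pq = (a, b)" by (metis surj_pair)
  show ?thesis unfolding wedge_at basis_at pq fst_conv snd_conv
    by (cases "x = a"; cases "y = b"; cases "x = b"; cases "y = a") simp_all
qed




lemma Aop_lin: "Aop i (\<lambda>q. a * f q + b * g q) q = a * Aop i f q + b * Aop i g q"
  by (simp add: Aop_def algebra_simps)

lemma Aop_swap: "Aop i (\<lambda>pq. t (snd pq, fst pq)) q = Aop i t (snd q, fst q)"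
  by (simp add: Aop_def algebra_simps)

lemma Aop_at: "Aop (b,m) t ((b1, fst p), (b2, snd p))
   = (if b1 = b then Pop m (proj b1 b2 t) p else 0) + (if b2 = b then Qop m (proj b1 b2 t) p else 0)"
  using proj_Aop[of b1 b2 b m t p] by (simp add: proj_def[of b1 b2 "Aop (b, m) t"])

theorem theorem2:
  fixes \<delta> :: "elt \<Rightarrow> tens"
  assumes "is_cocycle \<delta>"
  shows "is_coboundary \<delta>"
proof -
  note c = assms
  define D where "D i = \<delta> (basis_vec i)" for i
  have fD: "finite (supp (D i))" for i unfolding D_def by (rule D_fin[OF c])
  have rs: "of_int (m-n) * D (b, m+n) q = Aop (b,m) (D (b,n)) q - Aop (b,n) (D (b,m)) q" for m n b q
    unfolding D_def by (rule D_rel_same[OF c])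
  have rd: "Aop (b,m) (D (b',n)) q = Aop (b',n) (D (b,m)) q" if "b \<noteq> b'" for m n b b' q
    unfolding D_def by (rule D_rel_diff[OF c that])
  have prs: "of_int (m-n) * proj ba bb (D (b,m+n)) p
     = ((if ba = b then Pop m (proj ba bb (D (b,n))) p else 0) + (if bb = b then Qop m (proj ba bb (D (b,n))) p else 0))
     - ((if ba = b then Pop n (proj ba bb (D (b,m))) p else 0) + (if bb = b then Qop n (proj ba bb (D (b,m))) p else 0))"
    for m n b ba bb p
  proof -
    have "of_int (m-n) * proj ba bb (D (b,m+n)) p = of_int (m-n) * D (b, m+n) ((ba, fst p), (bb, snd p))"
      by (simp add: proj_def)
    also have "\<dots> = Aop (b,m) (D (b,n)) ((ba, fst p), (bb, snd p)) - Aop (b,n) (D (b,m)) ((ba, fst p), (bb, snd p))"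
      by (rule rs)
    finally show ?thesis by (simp only: Aop_at)
  qed
  have prd: "((if ba = b then Pop m (proj ba bb (D (b',n))) p else 0) + (if bb = b then Qop m (proj ba bb (D (b',n))) p else 0))
     = ((if ba = b' then Pop n (proj ba bb (D (b,m))) p else 0) + (if bb = b' then Qop n (proj ba bb (D (b,m))) p else 0))"
    if "b \<noteq> b'" for m n b b' ba bb p
    using rd[OF that, of m n "((ba, fst p), (bb, snd p))"] by (simp only: Aop_at)
  obtain rFF where fFF: "fs2 rFF" and hFF: "\<And>m p. proj False False (D (False, m)) p = Aw m rFF p"
  proof -
    have "\<exists>r. fs2 r \<and> (\<forall>m p. proj False False (D (False, m)) p = Aw m r p)"
    proof (rule witt2)
      show "fs2 (proj False False (D (False, m)))" for m by (rule fs2_proj[OF fD])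
      show "of_int (m-n) * proj False False (D (False, m+n)) p
          = Aw m (proj False False (D (False, n))) p - Aw n (proj False False (D (False, m))) p" for m n p
        using prs[where m=m and n=n and b=False and ba=False and bb=False and p=p] by (simp add: Aw_def)
    qed
    then show ?thesis using that by blast
  qed
  obtain rTT where fTT: "fs2 rTT" and hTT: "\<And>m p. proj True True (D (True, m)) p = Aw m rTT p"
  proof -
    have "\<exists>r. fs2 r \<and> (\<forall>m p. proj True True (D (True, m)) p = Aw m r p)"
    proof (rule witt2)
      show "fs2 (proj True True (D (True, m)))" for m by (rule fs2_proj[OF fD])
      show "of_int (m-n) * proj True True (D (True, m+n)) p
          = Aw m (proj True True (D (True, n))) p - Aw n (proj True True (D (True, m))) p" for m n p
        using prs[where m=m and n=n and b=True and ba=True and bb=True and p=p] by (simp add: Aw_def)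
    qed
    then show ?thesis using that by blast
  qed
  obtain rFT where fFT: "fs2 rFT" and hFT: "\<And>m p. proj False True (D (False, m)) p = Pop m rFT p
      \<and> proj False True (D (True, m)) p = Qop m rFT p"
  proof -
    have "\<exists>r. fs2 r \<and> (\<forall>m p. proj False True (D (False, m)) p = Pop m r p \<and> proj False True (D (True, m)) p = Qop m r p)"
    proof (rule cross2)
      show "fs2 (proj False True (D (False, m)))" for m by (rule fs2_proj[OF fD])
      show "fs2 (proj False True (D (True, m)))" for m by (rule fs2_proj[OF fD])
      show "of_int (m-n) * proj False True (D (False, m+n)) p
          = Pop m (proj False True (D (False, n))) p - Pop n (proj False True (D (False, m))) p" for m n p
        using prs[where m=m and n=n and b=False and ba=False and bb=True and p=p] by simp
      show "of_int (m-n) * proj False True (D (True, m+n)) p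
          = Qop m (proj False True (D (True, n))) p - Qop n (proj False True (D (True, m))) p" for m n p
        using prs[where m=m and n=n and b=True and ba=False and bb=True and p=p] by simp
      show "Pop m (proj False True (D (True, n))) p = Qop n (proj False True (D (False, m))) p" for m n p
        using prd[where b=False and b'=True and m=m and n=n and ba=False and bb=True and p=p] by simp
    qed
    then show ?thesis using that by blast
  qed
  obtain rTF where fTF: "fs2 rTF" and hTF: "\<And>m p. proj True False (D (True, m)) p = Pop m rTF p
      \<and> proj True False (D (False, m)) p = Qop m rTF p"
  proof -
    have "\<exists>r. fs2 r \<and> (\<forall>m p. proj True False (D (True, m)) p = Pop m r p \<and> proj True False (D (False, m)) p = Qop m r p)"
    proof (rule cross2)
      show "fs2 (proj True False (D (True, m)))" for m by (rule fs2_proj[OF fD])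
      show "fs2 (proj True False (D (False, m)))" for m by (rule fs2_proj[OF fD])
      show "of_int (m-n) * proj True False (D (True, m+n)) p
          = Pop m (proj True False (D (True, n))) p - Pop n (proj True False (D (True, m))) p" for m n p
        using prs[where m=m and n=n and b=True and ba=True and bb=False and p=p] by simp
      show "of_int (m-n) * proj True False (D (False, m+n)) p
          = Qop m (proj True False (D (False, n))) p - Qop n (proj True False (D (False, m))) p" for m n p
        using prs[where m=m and n=n and b=False and ba=True and bb=False and p=p] by simp
      show "Pop m (proj True False (D (False, n))) p = Qop n (proj True False (D (True, m))) p" for m n p
        using prd[where b=True and b'=False and m=m and n=n and ba=True and bb=False and p=p] by simp
    qed
    then show ?thesis using that by blast
  qed
  have zero_gen: "proj b' b' (D (b, k)) p = 0" if "b \<noteq> b'" for b b' k p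
  proof -
    have h: "of_int (m-n) * proj b' b' (D (b, m+n)) p = 0" for m n
      using prs[where m=m and n=n and b=b and ba=b' and bb=b' and p=p] that by simp
    show ?thesis
    proof (cases "k = 2")
      case True
      then show ?thesis using h[of 3 "-1"] by simp
    next
      case False
      have "of_int (k-1-1) * proj b' b' (D (b, k)) p = 0" using h[of "k-1" 1] by simp
      moreover have "(of_int (k-1-1)::complex) \<noteq> 0" using False by (subst of_int_eq_0_iff) simp
      ultimately show ?thesis by simp
    qed
  qed
  define rr :: tens where "rr q = (if fst (fst q) then (if fst (snd q) then rTT else rTF)
      else (if fst (snd q) then rFT else rFF)) (snd (fst q), snd (snd q))" for q
  have prr: "proj True True rr = rTT" "proj True False rr = rTF" "proj False True rr = rFT" "proj False False rr = rFF"
    by (auto simp: proj_def rr_def)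
  have Arr: "Aop i rr q = D i q" for i q
  proof -
    obtain b m where i: "i = (b, m)" by fastforce
    obtain b1 a1 b2 a2 where q: "q = ((b1, a1), (b2, a2))" by (metis prod.collapse)
    have "Aop i rr q = proj b1 b2 (Aop (b,m) rr) (a1, a2)" by (simp add: proj_def i q)
    also have "\<dots> = (if b1 = b then Pop m (proj b1 b2 rr) (a1,a2) else 0) + (if b2 = b then Qop m (proj b1 b2 rr) (a1,a2) else 0)"
      by (rule proj_Aop)
    also have "\<dots> = proj b1 b2 (D (b, m)) (a1, a2)"
      using hFF[of m "(a1,a2)"] hTT[of m "(a1,a2)"] hFT[of m "(a1,a2)"] hTF[of m "(a1,a2)"]
        zero_gen[of True False m "(a1,a2)"] zero_gen[of False True m "(a1,a2)"]
      by (cases b; cases b1; cases b2) (simp_all add: prr Aw_def)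
    also have "\<dots> = D i q" by (simp add: proj_def i q)
    finally show ?thesis .
  qed
  have frr: "finite (supp rr)"
  proof -
    let ?S = "\<lambda>b1 b2 (r::f2). (\<lambda>p. ((b1, fst p), (b2, snd p))) ` {p. r p \<noteq> 0}"
    have "supp rr \<subseteq> ?S True True rTT \<union> ?S True False rTF \<union> ?S False True rFT \<union> ?S False False rFF"
    proof
      fix q assume qs: "q \<in> supp rr"
      obtain b1 a1 b2 a2 where q: "q = ((b1, a1), (b2, a2))" by (metis prod.collapse)
      show "q \<in> ?S True True rTT \<union> ?S True False rTF \<union> ?S False True rFT \<union> ?S False False rFF"
        using qs unfolding q by (cases b1; cases b2) (auto simp: supp_def rr_def intro!: image_eqI[where x="(a1,a2)"])
    qed
    moreover have "finite (?S True True rTT \<union> ?S True False rTF \<union> ?S False True rFT \<union> ?S False False rFF)"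
      using fTT fTF fFT fFF by (simp add: fs2_def)
    ultimately show ?thesis by (rule finite_subset)
  qed
  define r' :: tens where "r' pq = rr pq / 2 - rr (snd pq, fst pq) / 2" for pq
  have Ar': "Aop i r' q = D i q" for i q
  proof -
    have "Aop i r' q = (1/2) * Aop i rr q + (-1/2) * Aop i (\<lambda>pq. rr (snd pq, fst pq)) q"
      unfolding r'_def[abs_def] using Aop_lin[of i "1/2" rr "-1/2" "\<lambda>pq. rr (snd pq, fst pq)" q] by simp
    also have "\<dots> = (1/2) * D i q + (-1/2) * D i (snd q, fst q)" by (simp add: Aop_swap Arr)
    also have "D i (snd q, fst q) = - D i q"
    proof -
      have "D i \<in> Wedge2" unfolding D_def by (rule cocycle_parts(1)[OF c basis_gW])
      then show ?thesis using Wedge2_antisym[of "D i" "fst q" "snd q"] by simp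
    qed
    finally show ?thesis by simp
  qed
  have r'W: "r' \<in> Wedge2"
  proof -
    have "r' = (\<Sum>pq\<in>supp rr. wedge (\<lambda>k. rr pq / 2 * basis_vec (fst pq) k) (basis_vec (snd pq)))"
    proof (rule ext)
      fix z :: "idx \<times> idx"
      obtain x y :: idx where z: "z = (x, y)" by (metis surj_pair)
      have "(\<Sum>pq\<in>supp rr. wedge (\<lambda>k. rr pq / 2 * basis_vec (fst pq) k) (basis_vec (snd pq))) z
        = (\<Sum>pq\<in>supp rr. (if pq = (x,y) then rr pq / 2 else 0)) - (\<Sum>pq\<in>supp rr. (if pq = (y,x) then rr pq / 2 else 0))"
      proof -
        have "(\<Sum>pq\<in>supp rr. wedge (\<lambda>k. rr pq / 2 * basis_vec (fst pq) k) (basis_vec (snd pq))) z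
          = (\<Sum>pq\<in>supp rr. (if pq = (x,y) then rr pq / 2 else 0) - (if pq = (y,x) then rr pq / 2 else 0))"
          unfolding sum_fun_apply z
          by (intro sum.cong refl) (rule wedge_basis_at)
        then show ?thesis by (simp add: sum_subtractf)
      qed
      also have "(\<Sum>pq\<in>supp rr. (if pq = (x,y) then rr pq / 2 else 0)) = rr (x,y) / 2"
        by (rule trans[OF sum_single[OF frr, where pz="(x,y)"]]) (auto simp: supp_def)
      also have "(\<Sum>pq\<in>supp rr. (if pq = (y,x) then rr pq / 2 else 0)) = rr (y,x) / 2"
        by (rule trans[OF sum_single[OF frr, where pz="(y,x)"]]) (auto simp: supp_def)
      finally show "r' z = (\<Sum>pq\<in>supp rr. wedge (\<lambda>k. rr pq / 2 * basis_vec (fst pq) k) (basis_vec (snd pq))) z"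
        by (simp add: r'_def z)
    qed
    also have "\<dots> \<in> Wedge2" by (rule Wedge2_sum[OF frr]) (blast intro: gW_scale_basis basis_gW)
    finally show ?thesis .
  qed
  have fr': "finite (supp r')" by (rule Wedge2_fin[OF r'W])
  show ?thesis unfolding is_coboundary_def
  proof (intro bexI[OF _ r'W] ballI ext)
    fix x q assume x: "x \<in> gW"
    have "\<delta> x q = (\<Sum>i\<in>supp x. x i * D i q)" unfolding D_def by (rule delta_expand[OF c x])
    also have "\<dots> = (\<Sum>i\<in>supp x. x i * act (basis_vec i) r' q)" by (simp add: act_basis[OF fr'] Ar')
    also have "\<dots> = act x r' q" by (rule act_expand[OF x, symmetric])
    finally show "\<delta> x q = act x r' q" .
  qed
qed


end
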